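(* Let $\mathcal G$ be a continuous game with players $k\in\{1,\dots,K\}$, action sets $\mathcal Z_k=\mathbb R^{n_k}$ and twice continuously differentiable cost functions $f_k:\mathbb R^n\to\mathbb R$, with gradient operator $F=F_{\mathcal G}$. Suppose $\mathcal G$ is monotone and there are $\ell,\Lambda>0$ with $\|F(z)-F(z')\|\le\ell\|z-z'\|$ and $\|\partial F(z)-\partial F(z')\|_\sigma\le\Lambda\|z-z'\|$ for all $z,z'$. Let $z^{(-1)},z^{(0)}\in\mathbb R^n$ and suppose there is $z^*$ with $F(z^* )=0$, $\|z^*-z^{(-1)}\|\le D$, $\|z^*-z^{(0)}\|\le D$. Let $\eta\le\min\{\frac1{150\ell},\frac1{1711D\Lambda}\}$ and let $z^{(t)}$ be the iterates $z^{(t+1)}=z^{(t)}-2\eta F(z^{(t)})+\eta F(z^{(t-1)})$. For each $k$ let $\mathcal Z_k':=\{w\in\mathbb R^{n_k}:\|w-z_k^{(0)}\|\le 3D\}$ and $\mathcal Z'=\prod_k\mathcal Z_k'$. Then for every integer $T\ge1$, $$\mathrm{Gap}_{\mathcal G}^{\mathcal Z'}(z^{(T)})\le\frac{180KD^2}{\eta\sqrt T}.$$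
   Context: $F_{\mathcal G}(z):=(\nabla_{z_1}f_1(z),\dots,\nabla_{z_K}f_K(z))$; the game is monotone if $\langle F_{\mathcal G}(z')-F_{\mathcal G}(z),z'-z\rangle\ge0$ for all $z,z'$. $\partial F$ is the Jacobian, $\|\cdot\|_\sigma$ the spectral norm, $z_k^{(0)}$ the $k$-th block of $z^{(0)}$. For compact $\mathcal Z_k'\subseteq\mathbb R^{n_k}$, the total gap function is $\mathrm{Gap}_{\mathcal G}^{\mathcal Z'}(z):=\sum_{k=1}^K\big(f_k(z)-\min_{z_k'\in\mathcal Z_k'}f_k(z_k',z_{-k})\big)$, where $z_{-k}$ denotes the actions of the players other than $k$. *)

theory Defs
  imports "HOL-Analysis.Analysis"
begin

text \<open>The joint action space is R^n, modelled as real^'n. The coordinates are partitioned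
  into K blocks by blk :: 'n => nat; block k (k < K) is the action space R^{n_k} of player k.\<close>

definition block_proj :: "('n::finite \<Rightarrow> nat) \<Rightarrow> nat \<Rightarrow> real^'n \<Rightarrow> real^'n" where
  "block_proj blk k v = (\<chi> i. if blk i = k then v $ i else 0)"

definition replace_block :: "('n::finite \<Rightarrow> nat) \<Rightarrow> nat \<Rightarrow> real^'n \<Rightarrow> real^'n \<Rightarrow> real^'n" where
  "replace_block blk k w z = (\<chi> i. if blk i = k then w $ i else z $ i)"

text \<open>Gradient operator F_G(z) = (grad_{z_1} f_1(z), ..., grad_{z_K} f_K(z)), where g k z is the
  full gradient of f k at z.\<close>
definition game_op :: "('n::finite \<Rightarrow> nat) \<Rightarrow> (nat \<Rightarrow> real^'n \<Rightarrow> real^'n) \<Rightarrow> real^'n \<Rightarrow> real^'n" where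
  "game_op blk g z = (\<chi> i. g (blk i) z $ i)"

text \<open>Z_k' = {w in R^{n_k} : ||w - z_k^(0)|| <= r}, embedded as vectors supported on block k.\<close>
definition ball_block :: "('n::finite \<Rightarrow> nat) \<Rightarrow> nat \<Rightarrow> real^'n \<Rightarrow> real \<Rightarrow> (real^'n) set" where
  "ball_block blk k z0 r = {w. block_proj blk k w = w \<and> norm (w - block_proj blk k z0) \<le> r}"

definition total_gap :: "('n::finite \<Rightarrow> nat) \<Rightarrow> nat \<Rightarrow> (nat \<Rightarrow> real^'n \<Rightarrow> real) \<Rightarrow> (nat \<Rightarrow> (real^'n) set) \<Rightarrow> real^'n \<Rightarrow> real" where
  "total_gap blk K f Z z = (\<Sum>k<K. f k z - (INF w\<in>Z k. f k (replace_block blk k w z)))"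

end

theory Submission
  imports Defs
begin


lemma ndsq: fixes u v :: "'a::real_inner"
  shows "(norm (u - v))^2 = (norm u)^2 - 2 * inner u v + (norm v)^2"
  by (simp add: power2_norm_eq_inner inner_diff_left inner_diff_right inner_commute)

lemma sq2: fixes u v :: "'a::real_normed_vector"
  shows "(norm (u + v))^2 \<le> 2*(norm u)^2 + 2*(norm v)^2"
proof -
  have "norm (u+v) \<le> norm u + norm v" by (rule norm_triangle_ineq)
  hence "(norm (u+v))^2 \<le> (norm u + norm v)^2" by (simp add: power_mono)
  also have "\<dots> \<le> 2*(norm u)^2 + 2*(norm v)^2"
    using sum_squares_bound[of "norm u" "norm v"] by (simp add: power2_sum)
  finally show ?thesis .
qed

lemma sq2d: fixes u v :: "'a::real_normed_vector"
  shows "(norm (u - v))^2 \<le> 2*(norm u)^2 + 2*(norm v)^2"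
  using sq2[of u "-v"] by simp

lemma lin7: "(A::real) \<le> 2*x + 2*E \<Longrightarrow> P \<le> 2*x+2*y \<Longrightarrow> E \<le> q \<Longrightarrow> q \<le> P/22500
  \<Longrightarrow> 0 \<le> P \<Longrightarrow> 0 \<le> y \<Longrightarrow> 0 \<le> x \<Longrightarrow> A + P/4 \<le> 3*x+3*y"
  by linarith

lemma og_core:
  fixes G :: "'a::real_inner \<Rightarrow> 'a" and x :: "nat \<Rightarrow> 'a" and c D :: real
  assumes mono: "\<And>u v. inner (G u - G v) (u - v) \<ge> 0"
    and lip: "\<And>u v. norm (G u - G v) \<le> c * norm (u - v)"
    and c0: "0 \<le> c" and c1: "c \<le> 1/150"
    and Gz: "G zs = 0"
    and rec: "\<And>n. x (Suc (Suc n)) = x (Suc n) - 2 *\<^sub>R G (x (Suc n)) + G (x n)"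
    and d0: "norm (zs - x 0) \<le> D" and d1: "norm (zs - x 1) \<le> D"
  shows "norm (x (Suc M) - zs) \<le> 4*D \<and> real (Suc M) * (norm (G (x (Suc M))))^2 \<le> 72 * D^2"
proof -
  define gg where "gg n = G (x n)" for n
  define P where "P n = (norm (gg (Suc n) - gg n))^2" for n
  define W where "W n = x (Suc n) + gg n" for n
  define r where "r n = (norm (W n - zs))^2" for n
  define a where "a n = G (W n)" for n
  define e where "e n = (norm (a n - gg (Suc n)))^2" for n
  define Phi where "Phi n = (norm (a (Suc n)))^2 + P n / 4" for n
  define S where "S n = r n + 2 * P n" for n
  have D0: "0 \<le> D" using d0 norm_ge_zero order_trans by blast
  have lipsq: "(norm (G u - G v))^2 \<le> c^2 * (norm (u - v))^2" for u v
  proof -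
    have "(norm (G u - G v))^2 \<le> (c * norm (u - v))^2"
      using lip[of u v] by (simp add: power_mono)
    thus ?thesis by (simp add: power_mult_distrib)
  qed
  have c2: "c^2 \<le> 1/22500"
  proof -
    have "c^2 \<le> (1/150)^2" using c0 c1 by (simp add: power_mono)
    thus ?thesis by (simp add: power_divide)
  qed
  have c2': "0 \<le> c^2" by simp
  have Wsuc: "W (Suc n) = W n - gg (Suc n)" for n
    by (simp add: W_def gg_def rec scaleR_2 algebra_simps)
  have xW: "x (Suc n) = W n - gg n" for n by (simp add: W_def)
  have WxS: "W (Suc n) - x (Suc n) = gg n - gg (Suc n)" for n
    by (simp add: Wsuc xW)
  have Pge: "0 \<le> P n" for n by (simp add: P_def)
  have ege: "0 \<le> e n" for n by (simp add: e_def)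
  have F2: "r (Suc n) \<le> r n + P n - (norm (gg n))^2" for n
  proof -
    have m: "inner (gg (Suc n)) (x (Suc n) - zs) \<ge> 0"
      using mono[of "x (Suc n)" zs] Gz by (simp add: gg_def)
    have "W (Suc n) - zs = (W n - zs) - gg (Suc n)" using Wsuc by simp
    hence e1: "r (Suc n) = r n - 2 * inner (W n - zs) (gg (Suc n)) + (norm (gg (Suc n)))^2"
      unfolding r_def by (simp only: ndsq)
    have e2: "inner (W n - zs) (gg (Suc n)) = inner (x (Suc n) - zs) (gg (Suc n)) + inner (gg n) (gg (Suc n))"
      by (simp add: W_def inner_add_left inner_diff_left)
    have e3: "P n = (norm (gg (Suc n)))^2 - 2 * inner (gg (Suc n)) (gg n) + (norm (gg n))^2"
      by (simp add: P_def ndsq)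
    show ?thesis using m e1 e2 e3 by (simp add: inner_commute)
  qed
  have F3: "P (Suc n) \<le> c^2 * (2 * (norm (gg n))^2 + 8 * P n)" for n
  proof -
    have "x (Suc (Suc n)) - x (Suc n) = - gg n - 2 *\<^sub>R (gg (Suc n) - gg n)"
      by (simp add: rec gg_def scaleR_2 algebra_simps)
    hence "(norm (x (Suc (Suc n)) - x (Suc n)))^2 \<le> 2 * (norm (gg n))^2 + 2 * (norm (2 *\<^sub>R (gg (Suc n) - gg n)))^2"
      using sq2d[of "- gg n" "2 *\<^sub>R (gg (Suc n) - gg n)"] by simp
    also have "\<dots> = 2 * (norm (gg n))^2 + 8 * P n"
      by (simp add: P_def power_mult_distrib)
    finally have h: "(norm (x (Suc (Suc n)) - x (Suc n)))^2 \<le> 2 * (norm (gg n))^2 + 8 * P n" .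
    have "P (Suc n) \<le> c^2 * (norm (x (Suc (Suc n)) - x (Suc n)))^2"
      using lipsq by (simp add: P_def gg_def)
    also have "\<dots> \<le> c^2 * (2 * (norm (gg n))^2 + 8 * P n)"
      using h by (simp add: mult_left_mono)
    finally show ?thesis .
  qed
  have F4: "S (Suc n) \<le> S n - (norm (gg n))^2 / 2" for n
  proof -
    have a1: "c^2 * (norm (gg n))^2 \<le> (norm (gg n))^2 / 22500"
      using mult_right_mono[OF c2, of "(norm (gg n))^2"] by simp
    have a2: "c^2 * P n \<le> P n / 22500"
      using mult_right_mono[OF c2 Pge[of n]] by simp
    have a3: "c^2 * (2 * (norm (gg n))^2 + 8 * P n) = 2 * (c^2 * (norm (gg n))^2) + 8 * (c^2 * P n)"
      by (simp add: algebra_simps)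
    show ?thesis using F2[of n] F3[of n] a1 a2 a3 Pge[of n] zero_le_power2[of "norm (gg n)"] unfolding S_def
      by linarith
  qed

  have F5: "S n + (\<Sum>k<n. (norm (gg k))^2) / 2 \<le> S 0" for n
  proof (induction n)
    case 0 then show ?case by simp
  next
    case (Suc n) then show ?case using F4[of n] by (simp add: field_simps)
  qed
  have g0: "norm (gg 0) \<le> c * D"
  proof -
    have "norm (gg 0) = norm (G (x 0) - G zs)" by (simp add: gg_def Gz)
    also have "\<dots> \<le> c * norm (x 0 - zs)" by (rule lip)
    also have "\<dots> \<le> c * D" using d0 c0 by (simp add: norm_minus_commute mult_left_mono)
    finally show ?thesis .
  qed
  have S0: "S 0 \<le> 2 * D^2"
  proof -
    have "norm (W 0 - zs) = norm ((x 1 - zs) + gg 0)" by (simp add: W_def algebra_simps)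
    also have "\<dots> \<le> norm (x 1 - zs) + norm (gg 0)" by (rule norm_triangle_ineq)
    also have "\<dots> \<le> D + D / 150" using d1 g0 c1 D0 mult_right_mono[OF c1 D0]
      by (simp add: norm_minus_commute)
    finally have "norm (W 0 - zs) \<le> D + D/150" .
    hence r0: "r 0 \<le> (D + D/150)^2" unfolding r_def by (rule power_mono) simp
    have "norm (x 1 - x 0) \<le> norm (x 1 - zs) + norm (zs - x 0)"
      using norm_triangle_ineq[of "x 1 - zs" "zs - x 0"] by simp
    also have "\<dots> \<le> 2 * D" using d0 d1 by (simp add: norm_minus_commute)
    finally have "norm (x 1 - x 0) \<le> 2 * D" .
    hence "(norm (x 1 - x 0))^2 \<le> (2*D)^2" by (rule power_mono) simp
    hence "c^2 * (norm (x 1 - x 0))^2 \<le> c^2 * (2*D)^2" by (simp add: mult_left_mono)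
    moreover have "P 0 \<le> c^2 * (norm (x 1 - x 0))^2" using lipsq by (simp add: P_def gg_def)
    moreover have "c^2 * (2*D)^2 \<le> (2*D)^2 / 22500" using mult_right_mono[OF c2, of "(2*D)^2"] by simp
    ultimately have "P 0 \<le> (2*D)^2 / 22500" by linarith
    moreover have "(D + D/150)^2 = (22801/22500) * D^2" by (simp add: power2_eq_square field_simps)
    moreover have "(2*D)^2 / 22500 = D^2 / 5625" by (simp add: power2_eq_square field_simps)
    ultimately show ?thesis using r0 zero_le_power2[of D] unfolding S_def by linarith
  qed
  have sumb: "(\<Sum>k<n. (norm (gg k))^2) \<le> 4 * D^2" for n
    using F5[of n] S0 Pge[of n] zero_le_power2[of "norm (W n - zs)"] unfolding S_def r_def by linarith
  have rb: "r n \<le> 2 * D^2" for n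
  proof -
    have "0 \<le> (\<Sum>k<n. (norm (gg k))^2)" by (simp add: sum_nonneg)
    thus ?thesis using F5[of n] S0 Pge[of n] unfolding S_def by linarith
  qed
  have Wb: "norm (W n - zs) \<le> 2 * D" for n
  proof -
    have "(2*D)^2 = 4 * D^2" by (simp add: power_mult_distrib)
    hence "(norm (W n - zs))^2 \<le> (2*D)^2" using rb[of n] zero_le_power2[of D] unfolding r_def by linarith
    from power2_le_imp_le[OF this] D0 show ?thesis by simp
  qed
  have gb: "norm (gg n) \<le> 2 * D" for n
  proof -
    have "(norm (gg n))^2 \<le> (\<Sum>k<Suc n. (norm (gg k))^2)"
      by (rule member_le_sum) auto
    also have "\<dots> \<le> (2*D)^2" using sumb[of "Suc n"] by (simp add: power2_eq_square)
    finally have "(norm (gg n))^2 \<le> (2*D)^2" .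
    from power2_le_imp_le[OF this] D0 show ?thesis by simp
  qed
  have distb: "norm (x (Suc M) - zs) \<le> 4 * D"
  proof -
    have "norm (x (Suc M) - zs) = norm ((W M - zs) - gg M)" by (simp add: xW algebra_simps)
    also have "\<dots> \<le> norm (W M - zs) + norm (gg M)" by (rule norm_triangle_ineq4)
    finally show ?thesis using Wb[of M] gb[of M] by linarith
  qed
  have st1: "(norm (a (Suc n)))^2 \<le> (norm (a n))^2 + (norm (a (Suc n) - gg (Suc n)))^2 - e n" for n
  proof -
    have "inner (a (Suc n) - a n) (W (Suc n) - W n) \<ge> 0" using mono by (simp add: a_def)
    hence m: "inner (a (Suc n) - a n) (gg (Suc n)) \<le> 0" by (simp add: Wsuc inner_minus_right)
    have i1: "inner (a (Suc n) - a n) (gg (Suc n)) = inner (a (Suc n)) (gg (Suc n)) - inner (a n) (gg (Suc n))"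
      by (simp add: inner_diff_left)
    show ?thesis using m i1 unfolding e_def ndsq by simp
  qed
  have st2: "(norm (a (Suc n) - gg (Suc n)))^2 \<le> c^2 * P n" for n
  proof -
    have "(norm (a (Suc n) - gg (Suc n)))^2 \<le> c^2 * (norm (W (Suc n) - x (Suc n)))^2"
      using lipsq by (simp add: a_def gg_def)
    thus ?thesis by (simp add: WxS P_def norm_minus_commute)
  qed
  have st3: "P (Suc m) \<le> 2 * e (Suc m) + 2 * c^2 * P m" for m
  proof -
    have "gg (Suc (Suc m)) - gg (Suc m) = (- (a (Suc m) - gg (Suc (Suc m)))) + (a (Suc m) - gg (Suc m))"
      by simp
    hence "P (Suc m) \<le> 2 * (norm (- (a (Suc m) - gg (Suc (Suc m)))))^2 + 2 * (norm (a (Suc m) - gg (Suc m)))^2"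
      unfolding P_def by (metis sq2)
    thus ?thesis using st2[of m] norm_minus_commute[of "gg (Suc (Suc m))" "a (Suc m)"] unfolding e_def by simp
  qed
  have F6: "Phi (Suc m) \<le> Phi m" for m
  proof -
    have a1: "c^2 * P (Suc m) \<le> P (Suc m) / 22500"
      using mult_right_mono[OF c2 Pge[of "Suc m"]] by simp
    have a2: "c^2 * P m \<le> P m / 22500"
      using mult_right_mono[OF c2 Pge[of m]] by simp
    show ?thesis using st1[of "Suc m"] st2[of "Suc m"] st3[of m] a1 a2 ege[of "Suc m"] Pge[of m]
      unfolding Phi_def by (simp add: algebra_simps)
  qed
  have F7: "Phi m \<le> 3 * ((norm (gg (Suc m)))^2 + (norm (gg m))^2)" for m
  proof -
    have "(norm (a (Suc m)))^2 \<le> 2 * (norm (gg (Suc m)))^2 + 2 * (norm (a (Suc m) - gg (Suc m)))^2"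
      using sq2[of "gg (Suc m)" "a (Suc m) - gg (Suc m)"] by simp
    moreover have "P m \<le> 2 * (norm (gg (Suc m)))^2 + 2 * (norm (gg m))^2"
      unfolding P_def by (rule sq2d)
    moreover have "c^2 * P m \<le> P m / 22500"
      using mult_right_mono[OF c2 Pge[of m]] by simp
    ultimately have "Phi m \<le> 3 * (norm (gg (Suc m)))^2 + 3 * (norm (gg m))^2"
      unfolding Phi_def using st2[of m] Pge[of m] zero_le_power2[of "norm (gg m)"]
      zero_le_power2[of "norm (gg (Suc m))"] lin7 by blast
    thus ?thesis by (simp add: algebra_simps)
  qed
  have F9: "(norm (gg (Suc m)))^2 \<le> 3 * Phi m" for m
  proof -
    have "(norm (gg (Suc m)))^2 \<le> 2 * (norm (a (Suc m)))^2 + 2 * (norm (a (Suc m) - gg (Suc m)))^2"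
      using sq2d[of "a (Suc m)" "a (Suc m) - gg (Suc m)"] by simp
    moreover have "c^2 * P m \<le> P m / 22500"
      using mult_right_mono[OF c2 Pge[of m]] by simp
    moreover have "3 * Phi m = 3 * (norm (a (Suc m)))^2 + 3 * P m / 4" by (simp add: Phi_def)
    ultimately show ?thesis using st2[of m] Pge[of m] zero_le_power2[of "norm (a (Suc m))"] by linarith
  qed
  have F8: "m \<le> N \<Longrightarrow> Phi N \<le> Phi m" for m N
  proof (induction N)
    case 0 then show ?case by simp
  next
    case (Suc N)
    show ?case
    proof (cases "m = Suc N")
      case True then show ?thesis by simp
    next
      case False
      hence "m \<le> N" using Suc.prems by simp
      thus ?thesis using Suc.IH F6[of N] by linarith
    qed
  qed
  have "real (Suc M) * Phi M = (\<Sum>m<Suc M. Phi M)" by simp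
  also have "\<dots> \<le> (\<Sum>m<Suc M. Phi m)" by (rule sum_mono) (simp add: F8)
  also have "\<dots> \<le> (\<Sum>m<Suc M. 3 * ((norm (gg (Suc m)))^2 + (norm (gg m))^2))"
    by (rule sum_mono) (rule F7)
  also have "\<dots> = 3 * ((\<Sum>m<Suc M. (norm (gg (Suc m)))^2) + (\<Sum>m<Suc M. (norm (gg m))^2))"
    by (simp add: sum.distrib sum_distrib_left)
  also have "\<dots> \<le> 3 * (4 * D^2 + 4 * D^2)"
  proof -
    have "(\<Sum>m<Suc M. (norm (gg (Suc m)))^2) \<le> (\<Sum>k<Suc (Suc M). (norm (gg k))^2)"
      by (simp only: sum.lessThan_Suc_shift[of _ "Suc M"]) simp
    thus ?thesis using sumb[of "Suc (Suc M)"] sumb[of "Suc M"] by simp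
  qed
  finally have "real (Suc M) * Phi M \<le> 24 * D^2" by simp
  moreover have "real (Suc M) * (norm (gg (Suc M)))^2 \<le> real (Suc M) * (3 * Phi M)"
    using F9[of M] by (simp add: mult_left_mono)
  moreover have "real (Suc M) * (3 * Phi M) = 3 * (real (Suc M) * Phi M)" by simp
  ultimately have "real (Suc M) * (norm (gg (Suc M)))^2 \<le> 72 * D^2" by linarith
  thus ?thesis using distb by (simp add: gg_def)
qed



lemma bp_idem: "block_proj blk k (block_proj blk k v) = block_proj blk k v"
  by (simp add: block_proj_def vec_eq_iff)

lemma bp_diff: "block_proj blk k (a - b) = block_proj blk k a - block_proj blk k b"
  by (simp add: block_proj_def vec_eq_iff)

lemma bp_norm: "norm (block_proj blk k v) \<le> norm v"
  by (rule norm_le_componentwise_cart) (simp add: block_proj_def)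

lemma rb_diff: assumes "block_proj blk k w = w"
  shows "z - replace_block blk k w z = block_proj blk k z - w"
proof -
  have "w $ i = 0" if "blk i \<noteq> k" for i
    using that arg_cong[OF assms, of "\<lambda>v. v $ i"] by (simp add: block_proj_def)
  thus ?thesis by (simp add: vec_eq_iff replace_block_def block_proj_def)
qed

lemma player_gap:
  fixes blk :: "'n::finite \<Rightarrow> nat" and f :: "real^'n \<Rightarrow> real" and gk F :: "real^'n \<Rightarrow> real^'n"
  assumes grad: "\<forall>x. (f has_derivative (\<lambda>h. gk x \<bullet> h)) (at x)"
    and agree: "\<forall>x i. blk i = k \<longrightarrow> F x $ i = gk x $ i"
    and mono: "\<forall>x y. (F y - F x) \<bullet> (y - x) \<ge> 0"
  shows "f z - f (replace_block blk k w z) \<le> norm (F z) * norm (z - replace_block blk k w z)"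
proof -
  define y where "y = replace_block blk k w z"
  define d where "d = z - y"
  have d0: "d $ i = 0" if "blk i \<noteq> k" for i
    using that by (simp add: d_def y_def replace_block_def)
  have gF: "gk x \<bullet> d = F x \<bullet> d" for x
    unfolding inner_vec_def
  proof (rule sum.cong[OF refl])
    fix i show "gk x $ i \<bullet> d $ i = F x $ i \<bullet> d $ i"
      using agree d0[of i] by (cases "blk i = k") auto
  qed
  define phi where "phi s = f (y + s *\<^sub>R d)" for s :: real
  have der: "(phi has_derivative (\<lambda>h. gk (y + s *\<^sub>R d) \<bullet> (h *\<^sub>R d))) (at s within {0..1})" for s
  proof -
    have l: "((\<lambda>s. y + s *\<^sub>R d) has_derivative (\<lambda>h. h *\<^sub>R d)) (at s within {0..1})"
      by (auto intro!: derivative_eq_intros)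
    show ?thesis unfolding phi_def
      by (rule has_derivative_compose[OF l]) (use grad in blast)
  qed
  obtain xi where xi: "xi \<in> {0<..<1}" and eq: "phi 1 - phi 0 = gk (y + xi *\<^sub>R d) \<bullet> ((1 - 0) *\<^sub>R d)"
    using mvt_simple[of 0 1 phi "\<lambda>s h. gk (y + s *\<^sub>R d) \<bullet> (h *\<^sub>R d)"] der by auto
  define p where "p = y + xi *\<^sub>R d"
  have "phi 1 - phi 0 = F p \<bullet> d" using eq gF by (simp add: p_def)
  moreover have "F p \<bullet> d \<le> F z \<bullet> d"
  proof -
    have zp: "z - p = (1 - xi) *\<^sub>R d" by (simp add: p_def d_def algebra_simps)
    have "0 \<le> (F z - F p) \<bullet> (z - p)" using mono by blast
    also have "\<dots> = (1 - xi) * ((F z - F p) \<bullet> d)" by (simp add: zp)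
    finally have "0 \<le> (F z - F p) \<bullet> d" using xi by (simp add: zero_le_mult_iff)
    thus ?thesis by (simp add: inner_diff_left)
  qed
  moreover have "F z \<bullet> d \<le> norm (F z) * norm d" by (rule norm_cauchy_schwarz)
  moreover have "phi 1 = f z" "phi 0 = f y" by (simp_all add: phi_def d_def)
  ultimately show ?thesis by (simp add: d_def y_def)
qed

theorem corollary6:
  fixes blk :: "'n::finite \<Rightarrow> nat" and K :: nat
    and f :: "nat \<Rightarrow> real^'n \<Rightarrow> real"
    and g :: "nat \<Rightarrow> real^'n \<Rightarrow> real^'n"
    and H :: "nat \<Rightarrow> real^'n \<Rightarrow> (real^'n) \<Rightarrow>\<^sub>L (real^'n)"
    and DF :: "real^'n \<Rightarrow> (real^'n) \<Rightarrow>\<^sub>L (real^'n)"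
    and z :: "int \<Rightarrow> real^'n" and zstar :: "real^'n"
    and ell \<Lambda> D \<eta> :: real and T :: nat
  assumes blk_range: "\<forall>i. blk i < K"
    and blk_nonempty: "\<forall>k<K. \<exists>i. blk i = k"
    and grad: "\<forall>k<K. \<forall>x. (f k has_derivative (\<lambda>h. g k x \<bullet> h)) (at x)"
    and hess: "\<forall>k<K. \<forall>x. (g k has_derivative blinfun_apply (H k x)) (at x)"
    and hess_cont: "\<forall>k<K. continuous_on UNIV (H k)"
    and monotone: "\<forall>x y. (game_op blk g y - game_op blk g x) \<bullet> (y - x) \<ge> 0"
    and jac: "\<forall>x. (game_op blk g has_derivative blinfun_apply (DF x)) (at x)"
    and ell_pos: "ell > 0" and Lambda_pos: "\<Lambda> > 0"
    and lip_F: "\<forall>x y. norm (game_op blk g x - game_op blk g y) \<le> ell * norm (x - y)"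
    and lip_DF: "\<forall>x y. norm (DF x - DF y) \<le> \<Lambda> * norm (x - y)"
    and zstar: "game_op blk g zstar = 0"
    and D_m1: "norm (zstar - z (-1)) \<le> D"
    and D_0: "norm (zstar - z 0) \<le> D"
    and eta_pos: "\<eta> > 0"
    and eta_le: "\<eta> \<le> min (1 / (150 * ell)) (1 / (1711 * D * \<Lambda>))"
    and iter: "\<forall>t::int\<ge>0. z (t + 1) = z t - (2 * \<eta>) *\<^sub>R game_op blk g (z t)
                                       + \<eta> *\<^sub>R game_op blk g (z (t - 1))"
    and T: "T \<ge> 1"
  shows "total_gap blk K f (\<lambda>k. ball_block blk k (z 0) (3 * D)) (z (int T))
           \<le> 180 * real K * D^2 / (\<eta> * sqrt (real T))"
proof -
  define F where "F = game_op blk g"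
  define zT where "zT = z (int T)"
  have D0: "0 \<le> D" using D_0 norm_ge_zero order_trans by blast
  have Dpos: "0 < D"
  proof (rule ccontr)
    assume "\<not> 0 < D" hence "D = 0" using D0 by simp
    thus False using eta_le eta_pos by simp
  qed
  have c1: "\<eta> * ell \<le> 1/150"
  proof -
    have "\<eta> \<le> 1 / (150 * ell)" using eta_le by simp
    thus ?thesis using ell_pos by (simp add: field_simps)
  qed
  have c0: "0 \<le> \<eta> * ell" using eta_pos ell_pos by simp
  define G where "G u = \<eta> *\<^sub>R F u" for u
  define x where "x n = z (int n - 1)" for n
  have core: "norm (x (Suc T) - zstar) \<le> 4*D \<and> real (Suc T) * (norm (G (x (Suc T))))^2 \<le> 72 * D^2"
  proof (rule og_core[where c = "\<eta> * ell"])
    show "inner (G u - G v) (u - v) \<ge> 0" for u v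
    proof -
      have "inner (G u - G v) (u - v) = \<eta> * inner (F u - F v) (u - v)"
        by (simp add: G_def scaleR_diff_right[symmetric])
      thus ?thesis using monotone eta_pos by (simp add: F_def)
    qed
    show "norm (G u - G v) \<le> \<eta> * ell * norm (u - v)" for u v
    proof -
      have "norm (G u - G v) = \<eta> * norm (F u - F v)"
        using eta_pos by (simp add: G_def scaleR_diff_right[symmetric])
      also have "\<dots> \<le> \<eta> * (ell * norm (u - v))"
        using lip_F eta_pos by (simp add: F_def)
      finally show ?thesis by simp
    qed
    show "0 \<le> \<eta> * ell" by (rule c0)
    show "\<eta> * ell \<le> 1/150" by (rule c1)
    show "G zstar = 0" using zstar by (simp add: G_def F_def)
    show "x (Suc (Suc n)) = x (Suc n) - 2 *\<^sub>R G (x (Suc n)) + G (x n)" for n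
    proof -
      have "z (int n + 1) = z (int n) - (2 * \<eta>) *\<^sub>R game_op blk g (z (int n))
                                       + \<eta> *\<^sub>R game_op blk g (z (int n - 1))"
        using iter by simp
      moreover have "int (Suc (Suc n)) - 1 = int n + 1" "int (Suc n) - 1 = int n" by simp_all
      ultimately show ?thesis by (simp add: x_def G_def F_def add.commute)
    qed
    show "norm (zstar - x 0) \<le> D" using D_m1 by (simp add: x_def)
    show "norm (zstar - x 1) \<le> D" using D_0 by (simp add: x_def)
  qed
  have xT: "x (Suc T) = zT" by (simp add: x_def zT_def)
  have distT: "norm (zT - zstar) \<le> 4 * D" using core xT by simp
  have FT: "real (Suc T) * (\<eta> * norm (F zT))^2 \<le> 72 * D^2"
    using core xT eta_pos by (simp add: G_def)
  have termb: "f k zT - (INF w\<in>ball_block blk k (z 0) (3 * D). f k (replace_block blk k w zT))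
      \<le> norm (F zT) * (8 * D)" if k: "k < K" for k
  proof -
    have nonempty: "ball_block blk k (z 0) (3 * D) \<noteq> {}"
    proof -
      have "block_proj blk k (z 0) \<in> ball_block blk k (z 0) (3 * D)"
        using D0 by (simp add: ball_block_def bp_idem)
      thus ?thesis by blast
    qed
    have "f k zT - norm (F zT) * (8 * D) \<le> f k (replace_block blk k w zT)"
      if w: "w \<in> ball_block blk k (z 0) (3 * D)" for w
    proof -
      have wp: "block_proj blk k w = w" and wn: "norm (w - block_proj blk k (z 0)) \<le> 3 * D"
        using w by (auto simp: ball_block_def)
      have pg: "f k zT - f k (replace_block blk k w zT) \<le> norm (F zT) * norm (zT - replace_block blk k w zT)"
      proof (rule player_gap)
        show "\<forall>x. (f k has_derivative (\<lambda>h. g k x \<bullet> h)) (at x)" using grad k by blast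
        show "\<forall>x i. blk i = k \<longrightarrow> F x $ i = g k x $ i" by (simp add: F_def game_op_def)
        show "\<forall>x y. (F y - F x) \<bullet> (y - x) \<ge> 0" using monotone by (simp add: F_def)
      qed
      have "zT - replace_block blk k w zT = block_proj blk k (zT - z 0) + (block_proj blk k (z 0) - w)"
        using rb_diff[OF wp, of zT] by (simp add: bp_diff)
      hence "norm (zT - replace_block blk k w zT) \<le> norm (block_proj blk k (zT - z 0)) + norm (block_proj blk k (z 0) - w)"
        by (simp add: norm_triangle_ineq)
      also have "\<dots> \<le> norm (zT - z 0) + 3 * D"
        using bp_norm[of blk k "zT - z 0"] wn by (simp add: norm_minus_commute)
      also have "norm (zT - z 0) \<le> norm (zT - zstar) + norm (zstar - z 0)"
        using norm_triangle_ineq[of "zT - zstar" "zstar - z 0"] by simp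
      finally have "norm (zT - replace_block blk k w zT) \<le> 8 * D" using distT D_0 by linarith
      hence "norm (F zT) * norm (zT - replace_block blk k w zT) \<le> norm (F zT) * (8 * D)"
        by (simp add: mult_left_mono)
      thus ?thesis using pg by linarith
    qed
    hence "f k zT - norm (F zT) * (8 * D) \<le> (INF w\<in>ball_block blk k (z 0) (3 * D). f k (replace_block blk k w zT))"
      by (intro cINF_greatest nonempty) 
    thus ?thesis by linarith
  qed
  have gap: "total_gap blk K f (\<lambda>k. ball_block blk k (z 0) (3 * D)) zT \<le> real K * (norm (F zT) * (8 * D))"
    unfolding total_gap_def using sum_bounded_above[of "{..<K}" _ "norm (F zT) * (8 * D)"] termb
    by simp
  have fin: "norm (F zT) * (8 * D) \<le> 180 * D^2 / (\<eta> * sqrt (real T))"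
  proof -
    have Tpos: "0 < sqrt (real T)" using T by simp
    define u where "u = \<eta> * norm (F zT) * sqrt (real T)"
    have u0: "0 \<le> u" using eta_pos by (simp add: u_def)
    have "u^2 = real T * (\<eta> * norm (F zT))^2" by (simp add: u_def power_mult_distrib)
    also have "\<dots> \<le> real (Suc T) * (\<eta> * norm (F zT))^2" by (simp add: mult_right_mono)
    also have "\<dots> \<le> (9 * D)^2"
    proof -
      have "(9 * D)^2 = 81 * D^2" by (simp add: power_mult_distrib)
      moreover have "0 \<le> D^2" by simp
      ultimately show ?thesis using FT by linarith
    qed
    finally have "u^2 \<le> (9 * D)^2" .
    from power2_le_imp_le[OF this] Dpos have "u \<le> 9 * D" by simp
    hence "8 * D * u \<le> 8 * D * (9 * D)" using D0 by (intro mult_left_mono) auto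
    moreover have "norm (F zT) * (8 * D) * (\<eta> * sqrt (real T)) = 8 * D * u"
      by (simp add: u_def algebra_simps)
    moreover have "8 * D * (9 * D) = 72 * D^2" by (simp add: power2_eq_square)
    moreover have "0 \<le> D^2" by simp
    ultimately have "norm (F zT) * (8 * D) * (\<eta> * sqrt (real T)) \<le> 180 * D^2"
      by linarith
    thus ?thesis using Tpos eta_pos by (simp add: pos_le_divide_eq)
  qed
  have "real K * (norm (F zT) * (8 * D)) \<le> real K * (180 * D^2 / (\<eta> * sqrt (real T)))"
    using fin by (intro mult_left_mono) auto
  moreover have "real K * (180 * D^2 / (\<eta> * sqrt (real T))) = 180 * real K * D^2 / (\<eta> * sqrt (real T))"
    by simp
  ultimately show ?thesis using gap unfolding zT_def by linarith
qed

end
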